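(* Let $V$ be real-valued and absolutely continuous on $[0,\pi]$ and let $a\in(0,\pi]$. There are constants $C_1>0$ (depending on $V$) and $C_2,C_3>0$ (depending on $V$ and $a$) such that for all $z\in\mathbb C$ and $n\in\mathbb N$: $$\left|\int_0^\pi F(x,z)\cos(nx)\,dx\right|\le C_1\frac{e^{\pi|\operatorname{Im}\sqrt z|}}{n^2}\left(1+\frac{1+|z|}{1+\pi|z|^{1/2}}\right),$$ $$\left|\int_0^a\rho(x)\cos(\sqrt z\,x)\sin(nx)\,dx\right|\le C_2\frac{e^{\pi|\operatorname{Im}\sqrt z|}}{n}\left(1+\frac{|z|}{1+\pi|z|^{1/2}}\right),$$ $$\left|\int_0^a\rho(x)F(x,z)\sin(nx)\,dx\right|\le C_3\frac{e^{\pi|\operatorname{Im}\sqrt z|}}{n}\left(1+\frac{1}{1+\pi|z|^{1/2}}\right).$$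
   Context: $\sqrt{\cdot}$ is the principal branch. $\xi(x,z)$ is the solution of $-\xi''+V\xi=z\xi$, $\xi(0,z)=1$, $\xi'(0,z)=0$. $F(x,z):=\xi(x,z)-\cos(\sqrt z\,x)$ and $\rho(x):=\frac12\int_0^xV(y)\,dy-\frac{x}{2\pi}\int_0^\pi V(y)\,dy$ for $x\in[0,\pi]$. *)

theory Defs
  imports "HOL-Analysis.Analysis"
begin

definition absolutely_continuous_on :: "real set \<Rightarrow> (real \<Rightarrow> real) \<Rightarrow> bool" where
  "absolutely_continuous_on S f \<longleftrightarrow>
     (\<forall>e>0. \<exists>d>0. \<forall>I :: (real \<times> real) set.
        finite I \<and> (\<forall>(a,b)\<in>I. a \<le> b \<and> {a..b} \<subseteq> S) \<and>
        pairwise (\<lambda>(a,b) (c,d). {a<..<b} \<inter> {c<..<d} = {}) I \<and>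
        (\<Sum>(a,b)\<in>I. b - a) < d
        \<longrightarrow> (\<Sum>(a,b)\<in>I. \<bar>f b - f a\<bar>) < e)"

text \<open>xi V x z: the solution of -xi'' + V xi = z xi on [0,pi] with xi(0)=1, xi'(0)=0
(set to 0 outside [0,pi] to make it unique as a function).\<close>
definition xi :: "(real \<Rightarrow> real) \<Rightarrow> real \<Rightarrow> complex \<Rightarrow> complex" where
  "xi V x z = (THE f. f 0 = 1 \<and>
      (\<exists>f'. f' 0 = 0 \<and>
         (\<forall>t\<in>{0..pi}. (f has_vector_derivative f' t) (at t within {0..pi}) \<and>
                       (f' has_vector_derivative ((complex_of_real (V t) - z) * f t)) (at t within {0..pi}))) \<and>
      (\<forall>t. t \<notin> {0..pi} \<longrightarrow> f t = 0)) x"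

definition F :: "(real \<Rightarrow> real) \<Rightarrow> real \<Rightarrow> complex \<Rightarrow> complex" where
  "F V x z = xi V x z - cos (csqrt z * complex_of_real x)"

definition rho :: "(real \<Rightarrow> real) \<Rightarrow> real \<Rightarrow> real" where
  "rho V x = (1/2) * integral {0..x} V - x / (2*pi) * integral {0..pi} V"

end

theory Submission
  imports Defs
begin


definition Cf :: "complex \<Rightarrow> real \<Rightarrow> complex" where
  "Cf w s = cos (w * of_real s)"
definition Sf :: "complex \<Rightarrow> real \<Rightarrow> complex" where
  "Sf w s = (if w = 0 then of_real s else sin (w * of_real s) / w)"

lemma norm_cos_le_exp: "norm (cos u) \<le> exp \<bar>Im u\<bar>"
proof -
  have "norm (cos u) \<le> (norm (exp (\<i>*u)) + norm (exp (-(\<i>*u)))) / 2"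
    unfolding cos_exp_eq by (metis divide_right_mono norm_divide norm_numeral norm_triangle_ineq zero_le_numeral)
  also have "\<dots> = (exp (- Im u) + exp (Im u)) / 2" by simp
  also have "\<dots> \<le> exp \<bar>Im u\<bar>" by (cases "Im u \<ge> 0") auto
  finally show ?thesis .
qed

lemma norm_sin_le_exp: "norm (sin u) \<le> exp \<bar>Im u\<bar>"
proof -
  have "norm (sin u) \<le> (norm (exp (\<i>*u)) + norm (exp (-(\<i>*u)))) / 2"
    unfolding sin_exp_eq norm_divide norm_mult using norm_triangle_ineq4[of "exp (\<i>*u)" "exp (-(\<i>*u))"]
    by (simp add: divide_right_mono)
  also have "\<dots> = (exp (- Im u) + exp (Im u)) / 2" by simp
  also have "\<dots> \<le> exp \<bar>Im u\<bar>" by (cases "Im u \<ge> 0") auto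
  finally show ?thesis .
qed

lemma Cf_deriv: "((Cf w) has_vector_derivative (- (w*w) * Sf w s)) (at s within T)"
proof -
  have "((\<lambda>u. cos (w * u)) has_field_derivative (- sin (w * of_real s) * w)) (at (of_real s))"
    by (auto intro!: derivative_eq_intros)
  hence "((\<lambda>x. cos (w * of_real x)) has_vector_derivative (- sin (w * of_real s) * w)) (at s within T)"
    by (rule has_vector_derivative_real_field)
  moreover have "- sin (w * of_real s) * w = - (w*w) * Sf w s"
    by (auto simp: Sf_def)
  ultimately show ?thesis unfolding Cf_def[abs_def] by (metis (no_types, lifting))
qed

lemma Sf_deriv: "((Sf w) has_vector_derivative Cf w s) (at s within T)"
proof (cases "w = 0")
  case True
  have "((\<lambda>x. complex_of_real x) has_vector_derivative 1) (at s within T)"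
    using has_vector_derivative_of_real[OF DERIV_ident] by simp
  then show ?thesis using True by (simp add: Sf_def[abs_def] Cf_def)
next
  case False
  have "((\<lambda>u. sin (w * u) / w) has_field_derivative (cos (w * of_real s) * w / w)) (at (of_real s))"
    by (auto intro!: derivative_eq_intros)
  hence "((\<lambda>x. sin (w * of_real x) / w) has_vector_derivative (cos (w * of_real s) * w / w)) (at s within T)"
    by (rule has_vector_derivative_real_field)
  then show ?thesis using False by (simp add: Sf_def[abs_def] Cf_def)
qed

lemma Cf_bound: "norm (Cf w s) \<le> exp (\<bar>Im w\<bar> * \<bar>s\<bar>)"
  using norm_cos_le_exp[of "w * of_real s"] by (simp add: Cf_def abs_mult)

lemma wSf_bound: "norm (w * Sf w s) \<le> exp (\<bar>Im w\<bar> * \<bar>s\<bar>)"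
  using norm_sin_le_exp[of "w * of_real s"] by (simp add: Sf_def abs_mult)

lemma Sf_bound:
  assumes "0 \<le> s" shows "norm (Sf w s) \<le> s * exp (\<bar>Im w\<bar> * s)"
proof -
  have "((Cf w) has_integral (Sf w s - Sf w 0)) {0..s}"
    by (rule fundamental_theorem_of_calculus[OF assms]) (rule Sf_deriv)
  hence "norm (Sf w s - Sf w 0) \<le> exp (\<bar>Im w\<bar> * s) * Henstock_Kurzweil_Integration.content (cbox 0 s)"
  proof (intro has_integral_bound[where f="Cf w"])
    fix x assume "x \<in> cbox 0 s"
    hence "\<bar>x\<bar> \<le> s" by auto
    hence "exp (\<bar>Im w\<bar> * \<bar>x\<bar>) \<le> exp (\<bar>Im w\<bar> * s)" by (simp add: mult_left_mono)
    thus "norm (Cf w x) \<le> exp (\<bar>Im w\<bar> * s)" using Cf_bound[of w x] by linarith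
  qed auto
  moreover have "Sf w 0 = 0" by (simp add: Sf_def)
  ultimately show ?thesis using assms by (simp add: mult.commute)
qed



lemma gronwall:
  fixes \<phi> :: "real \<Rightarrow> real"
  assumes b: "0 \<le> b" and cont: "continuous_on {0..b} \<phi>" and L: "0 \<le> L"
    and le: "\<And>x. x \<in> {0..b} \<Longrightarrow> \<phi> x \<le> \<alpha> + L * integral {0..x} \<phi>"
    and x: "x \<in> {0..b}"
  shows "\<phi> x \<le> \<alpha> * exp (L * x)"
proof -
  define R where "R u = \<alpha> + L * integral {0..u} \<phi>" for u
  define W where "W u = exp (- L * u) * R u" for u
  have dR: "(R has_real_derivative (L * \<phi> u)) (at u within {0..b})" if "u \<in> {0..b}" for u
  proof -
    have "((\<lambda>u. integral {0..u} \<phi>) has_real_derivative \<phi> u) (at u within {0..b})"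
      using integral_has_vector_derivative[OF cont that]
      by (simp add: has_real_derivative_iff_has_vector_derivative)
    then show ?thesis unfolding R_def[abs_def] by (auto intro!: derivative_eq_intros)
  qed
  have dW: "(W has_real_derivative (exp (- L * u) * (L * \<phi> u - L * R u))) (at u within {0..b})"
    if "u \<in> {0..b}" for u
    unfolding W_def[abs_def]
    by (rule derivative_eq_intros dR[OF that] refl)+ (simp add: algebra_simps)
  have "((\<lambda>u. exp (- L * u) * (L * \<phi> u - L * R u)) has_integral (W x - W 0)) {0..x}"
  proof (rule fundamental_theorem_of_calculus)
    show "0 \<le> x" using x by auto
    fix u assume u: "u \<in> {0..x}"
    hence "u \<in> {0..b}" using x by auto
    from dW[OF this] have "(W has_real_derivative (exp (- L * u) * (L * \<phi> u - L * R u))) (at u within {0..x})"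
      by (rule DERIV_subset) (use x in auto)
    thus "(W has_vector_derivative (exp (- L * u) * (L * \<phi> u - L * R u))) (at u within {0..x})"
      by (simp add: has_real_derivative_iff_has_vector_derivative)
  qed
  moreover have "((\<lambda>u. 0::real) has_integral 0) {0..x}" by simp
  ultimately have "W x - W 0 \<le> 0"
  proof (rule has_integral_le)
    fix u assume u: "u \<in> {0..x}"
    hence "u \<in> {0..b}" using x by auto
    hence "\<phi> u \<le> R u" using le R_def by auto
    hence "L * \<phi> u - L * R u \<le> 0" using L by (simp add: mult_left_mono)
    thus "exp (- L * u) * (L * \<phi> u - L * R u) \<le> 0" by (simp add: mult_nonneg_nonpos)
  qed
  hence "exp (- L * x) * R x \<le> \<alpha>" by (simp add: W_def R_def)
  hence "R x \<le> \<alpha> * exp (L * x)"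
    by (simp add: exp_minus field_simps)
  moreover have "\<phi> x \<le> R x" using le[OF x] R_def by auto
  ultimately show ?thesis by linarith
qed



lemma Sf_refl_deriv: "((\<lambda>t. Sf w (x - t)) has_vector_derivative (- Cf w (x - t))) (at t within T)"
proof -
  have "((\<lambda>t. x - t) has_vector_derivative (-1)) (at t within T)"
    by (auto intro!: derivative_eq_intros simp: has_real_derivative_iff_has_vector_derivative[symmetric])
  from vector_diff_chain_within[OF this Sf_deriv]
  show ?thesis by (simp add: o_def)
qed

lemma Cf_refl_deriv: "((\<lambda>t. Cf w (x - t)) has_vector_derivative ((w*w) * Sf w (x - t))) (at t within T)"
proof -
  have "((\<lambda>t. x - t) has_vector_derivative (-1)) (at t within T)"
    by (auto intro!: derivative_eq_intros simp: has_real_derivative_iff_has_vector_derivative[symmetric])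
  from vector_diff_chain_within[OF this Cf_deriv]
  show ?thesis by (simp add: o_def)
qed

lemma Cf0[simp]: "Cf w 0 = 1" and Sf0[simp]: "Sf w 0 = 0"
  by (auto simp: Cf_def Sf_def)

locale ode_sol =
  fixes V :: "real \<Rightarrow> real" and z w :: complex and g g' :: "real \<Rightarrow> complex"
  assumes ww: "w * w = z"
    and dg: "\<And>t. t \<in> {0..pi} \<Longrightarrow> (g has_vector_derivative g' t) (at t within {0..pi})"
    and dg': "\<And>t. t \<in> {0..pi} \<Longrightarrow> (g' has_vector_derivative ((of_real (V t) - z) * g t)) (at t within {0..pi})"
begin

lemma volterra:
  assumes x: "x \<in> {0..pi}"
  shows "((\<lambda>t. Sf w (x - t) * (of_real (V t) * g t)) has_integral
            (g x - (g 0 * Cf w x + g' 0 * Sf w x))) {0..x}"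
proof -
  define h where "h t = Sf w (x - t) * g' t + Cf w (x - t) * g t" for t
  have "((\<lambda>t. Sf w (x - t) * (of_real (V t) * g t)) has_integral (h x - h 0)) {0..x}"
  proof (rule fundamental_theorem_of_calculus)
    show "0 \<le> x" using x by auto
    fix t assume t: "t \<in> {0..x}"
    hence t': "t \<in> {0..pi}" using x by auto
    have d1: "(g has_vector_derivative g' t) (at t within {0..x})"
      by (rule has_vector_derivative_within_subset[OF dg[OF t']]) (use x in auto)
    have d2: "(g' has_vector_derivative ((of_real (V t) - z) * g t)) (at t within {0..x})"
      by (rule has_vector_derivative_within_subset[OF dg'[OF t']]) (use x in auto)
    have "(h has_vector_derivative
       (Sf w (x - t) * ((of_real (V t) - z) * g t) + (- Cf w (x - t)) * g' t
        + (Cf w (x - t) * g' t + ((w*w) * Sf w (x - t)) * g t))) (at t within {0..x})"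
      unfolding h_def[abs_def]
      by (intro has_vector_derivative_add has_vector_derivative_mult Sf_refl_deriv Cf_refl_deriv d1 d2)
    moreover have "Sf w (x - t) * ((of_real (V t) - z) * g t) + (- Cf w (x - t)) * g' t
        + (Cf w (x - t) * g' t + ((w*w) * Sf w (x - t)) * g t) = Sf w (x - t) * (of_real (V t) * g t)"
      using ww by (simp add: algebra_simps)
    ultimately show "(h has_vector_derivative Sf w (x - t) * (of_real (V t) * g t)) (at t within {0..x})"
      by simp
  qed
  moreover have "h x - h 0 = g x - (g 0 * Cf w x + g' 0 * Sf w x)"
    by (simp add: h_def algebra_simps)
  ultimately show ?thesis by simp
qed

lemma volterra':
  assumes x: "x \<in> {0..pi}"
  shows "((\<lambda>t. Cf w (x - t) * (of_real (V t) * g t)) has_integral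
            (g' x - (g' 0 * Cf w x - z * g 0 * Sf w x))) {0..x}"
proof -
  define h where "h t = Cf w (x - t) * g' t - z * Sf w (x - t) * g t" for t
  have "((\<lambda>t. Cf w (x - t) * (of_real (V t) * g t)) has_integral (h x - h 0)) {0..x}"
  proof (rule fundamental_theorem_of_calculus)
    show "0 \<le> x" using x by auto
    fix t assume t: "t \<in> {0..x}"
    hence t': "t \<in> {0..pi}" using x by auto
    have d1: "(g has_vector_derivative g' t) (at t within {0..x})"
      by (rule has_vector_derivative_within_subset[OF dg[OF t']]) (use x in auto)
    have d2: "(g' has_vector_derivative ((of_real (V t) - z) * g t)) (at t within {0..x})"
      by (rule has_vector_derivative_within_subset[OF dg'[OF t']]) (use x in auto)
    have "(h has_vector_derivative
       (Cf w (x - t) * ((of_real (V t) - z) * g t) + ((w*w) * Sf w (x - t)) * g' t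
        - (z * Sf w (x - t) * g' t + z * (- Cf w (x - t)) * g t))) (at t within {0..x})"
      unfolding h_def[abs_def]
      by (intro has_vector_derivative_diff has_vector_derivative_add has_vector_derivative_mult
           has_vector_derivative_mult_right Sf_refl_deriv Cf_refl_deriv d1 d2)
    moreover have "Cf w (x - t) * ((of_real (V t) - z) * g t) + ((w*w) * Sf w (x - t)) * g' t
        - (z * Sf w (x - t) * g' t + z * (- Cf w (x - t)) * g t) = Cf w (x - t) * (of_real (V t) * g t)"
      using ww by (simp add: algebra_simps)
    ultimately show "(h has_vector_derivative Cf w (x - t) * (of_real (V t) * g t)) (at t within {0..x})"
      by simp
  qed
  moreover have "h x - h 0 = g' x - (g' 0 * Cf w x - z * g 0 * Sf w x)"
    by (simp add: h_def algebra_simps)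
  ultimately show ?thesis by simp
qed

end



locale ode_solB = ode_sol +
  fixes B :: real
  assumes Vcont: "continuous_on {0..pi} V"
    and VB: "\<And>t. t \<in> {0..pi} \<Longrightarrow> \<bar>V t\<bar> \<le> B"
begin

lemma B_nonneg: "0 \<le> B" using VB[of 0] by auto

lemma g_cont: "continuous_on {0..pi} g"
  using dg by (rule continuous_on_vector_derivative)

lemma g'_cont: "continuous_on {0..pi} g'"
  using dg' by (rule continuous_on_vector_derivative)

lemma sol_bound:
  assumes x: "x \<in> {0..pi}"
  shows "norm (g x) \<le> (norm (g 0) + pi * norm (g' 0)) * exp (pi * pi * B) * exp (\<bar>Im w\<bar> * x)"
proof -
  define \<tau> where "\<tau> = \<bar>Im w\<bar>"
  define \<alpha> where "\<alpha> = norm (g 0) + pi * norm (g' 0)"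
  define \<phi> where "\<phi> t = norm (g t) * exp (- \<tau> * t)" for t
  have phic: "continuous_on {0..pi} \<phi>"
    unfolding \<phi>_def[abs_def] by (intro continuous_intros g_cont)
  have key: "\<phi> y \<le> \<alpha> + (pi * B) * integral {0..y} \<phi>" if y: "y \<in> {0..pi}" for y
  proof -
    note vi = volterra[OF y]
    define I where "I = integral {0..y} (\<lambda>t. Sf w (y - t) * (of_real (V t) * g t))"
    have gy: "g y = g 0 * Cf w y + g' 0 * Sf w y + I"
      using integral_unique[OF vi] I_def by simp
    have sub: "{0..y} \<subseteq> {0..pi}" using y by auto
    have "norm (g 0 * Cf w y + g' 0 * Sf w y) \<le> norm (g 0) * exp (\<tau> * y) + norm (g' 0) * (pi * exp (\<tau> * y))"
    proof -
      have "norm (Cf w y) \<le> exp (\<tau> * y)" using Cf_bound[of w y] y by (simp add: \<tau>_def)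
      moreover have "norm (Sf w y) \<le> pi * exp (\<tau> * y)"
        using Sf_bound[of y w] y by (smt (verit, best) \<tau>_def atLeastAtMost_iff exp_gt_zero mult_right_mono)
      ultimately show ?thesis
        by (smt (verit, del_insts) mult_left_mono norm_ge_zero norm_mult norm_triangle_ineq)
    qed
    also have "\<dots> = \<alpha> * exp (\<tau> * y)" by (simp add: \<alpha>_def algebra_simps)
    finally have n1: "norm (g 0 * Cf w y + g' 0 * Sf w y) \<le> \<alpha> * exp (\<tau> * y)" .
    have "norm I \<le> integral {0..y} (\<lambda>t. pi * B * exp (\<tau> * y) * \<phi> t)"
      unfolding I_def
    proof (rule integral_norm_bound_integral)
      show "(\<lambda>t. Sf w (y - t) * (of_real (V t) * g t)) integrable_on {0..y}"
        using vi by blast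
      show "(\<lambda>t. pi * B * exp (\<tau> * y) * \<phi> t) integrable_on {0..y}"
        by (intro integrable_continuous_interval continuous_intros continuous_on_subset[OF phic sub])
      fix t assume t: "t \<in> {0..y}"
      hence t': "t \<in> {0..pi}" using y by auto
      have "norm (Sf w (y - t)) \<le> pi * exp (\<tau> * (y - t))"
        using Sf_bound[of "y - t" w] t y unfolding \<tau>_def
        by (smt (verit) atLeastAtMost_iff exp_gt_zero mult_right_mono)
      moreover have "norm (of_real (V t) * g t) \<le> B * (\<phi> t * exp (\<tau> * t))"
        using VB[OF t'] by (simp add: \<phi>_def norm_mult mult_right_mono exp_minus field_simps)
      ultimately have "norm (Sf w (y - t)) * norm (of_real (V t) * g t) \<le> (pi * exp (\<tau> * (y - t))) * (B * (\<phi> t * exp (\<tau> * t)))"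
        by (intro mult_mono) auto
      hence "norm (Sf w (y - t) * (of_real (V t) * g t)) \<le> (pi * exp (\<tau> * (y - t))) * (B * (\<phi> t * exp (\<tau> * t)))"
        by (metis norm_mult)
      also have "\<dots> = pi * B * exp (\<tau> * y) * \<phi> t"
      proof -
        have "exp (\<tau> * (y - t)) * exp (\<tau> * t) = exp (\<tau> * y)"
          by (simp add: mult_exp_exp algebra_simps)
        thus ?thesis by (metis (no_types, lifting) mult.assoc mult.commute)
      qed
      finally show "norm (Sf w (y - t) * (of_real (V t) * g t)) \<le> pi * B * exp (\<tau> * y) * \<phi> t" .
    qed
    also have "\<dots> = pi * B * exp (\<tau> * y) * integral {0..y} \<phi>" by simp
    finally have n2: "norm I \<le> pi * B * exp (\<tau> * y) * integral {0..y} \<phi>" .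
    have "norm (g y) \<le> \<alpha> * exp (\<tau> * y) + pi * B * exp (\<tau> * y) * integral {0..y} \<phi>"
      using gy n1 n2 norm_triangle_ineq by (smt (verit))
    hence A: "norm (g y) \<le> (\<alpha> + pi * B * integral {0..y} \<phi>) * exp (\<tau> * y)"
      by (simp add: algebra_simps)
    have "norm (g y) * exp (- \<tau> * y) \<le> (\<alpha> + pi * B * integral {0..y} \<phi>) * exp (\<tau> * y) * exp (- \<tau> * y)"
      by (rule mult_right_mono[OF A]) simp
    also have "\<dots> = \<alpha> + pi * B * integral {0..y} \<phi>"
      by (simp add: mult.assoc mult_exp_exp)
    finally show ?thesis by (simp add: \<phi>_def)
  qed
  have "\<phi> x \<le> \<alpha> * exp (pi * B * x)"
    by (rule gronwall[OF _ phic _ key x]) (use B_nonneg in auto)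
  also have "\<dots> \<le> \<alpha> * exp (pi * pi * B)"
  proof -
    have "pi * B * x \<le> pi * B * pi" using x B_nonneg by (intro mult_left_mono) auto
    moreover have "0 \<le> \<alpha>" by (simp add: \<alpha>_def)
    ultimately show ?thesis by (intro mult_left_mono) (auto simp: mult_ac)
  qed
  finally have P: "\<phi> x \<le> \<alpha> * exp (pi * pi * B)" .
  have "norm (g x) = \<phi> x * exp (\<tau> * x)"
    by (simp add: \<phi>_def mult.assoc mult_exp_exp)
  also have "\<dots> \<le> \<alpha> * exp (pi * pi * B) * exp (\<tau> * x)"
    by (rule mult_right_mono[OF P]) simp
  finally show ?thesis by (simp add: \<alpha>_def \<tau>_def)
qed

end



lemma series_vderiv:
  fixes f f' :: "nat \<Rightarrow> real \<Rightarrow> complex"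
  assumes ab: "a \<le> b"
    and d: "\<And>n x. x \<in> {a..b} \<Longrightarrow> (f n has_vector_derivative f' n x) (at x within {a..b})"
    and bd: "\<And>n x. x \<in> {a..b} \<Longrightarrow> norm (f' n x) \<le> M n" and sM: "summable M"
    and s0: "summable (\<lambda>n. f n a)"
    and x: "x \<in> {a..b}"
  shows "((\<lambda>x. \<Sum>n. f n x) has_vector_derivative (\<Sum>n. f' n x)) (at x within {a..b})"
proof -
  have ul: "uniform_limit {a..b} (\<lambda>n x. \<Sum>i<n. f' i x) (\<lambda>x. \<Sum>i. f' i x) sequentially"
    by (rule Weierstrass_m_test[OF bd sM])
  have "\<exists>g. \<forall>x\<in>{a..b}. (\<lambda>n. f n x) sums (g x) \<and>
      (g has_derivative (\<lambda>h. h *\<^sub>R (\<Sum>i. f' i x))) (at x within {a..b})"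
  proof (rule has_derivative_series[where f' = "\<lambda>n x h. h *\<^sub>R f' n x"])
    show "convex {a..b}" by simp
    show "\<And>n x. x \<in> {a..b} \<Longrightarrow> (f n has_derivative (\<lambda>h. h *\<^sub>R f' n x)) (at x within {a..b})"
      using d by (simp add: has_vector_derivative_def)
    show "a \<in> {a..b}" using ab by simp
    show "(\<lambda>n. f n a) sums (\<Sum>n. f n a)" using s0 by (simp add: summable_sums)
    fix e :: real assume e: "0 < e"
    show "\<forall>\<^sub>F n in sequentially. \<forall>x\<in>{a..b}. \<forall>h.
        norm ((\<Sum>i<n. h *\<^sub>R f' i x) - h *\<^sub>R (\<Sum>i. f' i x)) \<le> e * norm h"
      using uniform_limitD[OF ul e]
    proof eventually_elim
      case (elim n)
      show ?case
      proof (intro ballI allI)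
        fix x h assume x: "x \<in> {a..b}"
        have "norm ((\<Sum>i<n. h *\<^sub>R f' i x) - h *\<^sub>R (\<Sum>i. f' i x))
            = \<bar>h\<bar> * dist (\<Sum>i<n. f' i x) (\<Sum>i. f' i x)"
          by (simp add: scaleR_sum_right[symmetric] scaleR_diff_right[symmetric] dist_norm)
        also have "\<dots> \<le> \<bar>h\<bar> * e"
        proof (rule mult_left_mono)
          show "dist (\<Sum>i<n. f' i x) (\<Sum>i. f' i x) \<le> e" using elim x by (meson less_imp_le)
        qed simp
        finally show "norm ((\<Sum>i<n. h *\<^sub>R f' i x) - h *\<^sub>R (\<Sum>i. f' i x)) \<le> e * norm h"
          by (simp add: mult.commute)
      qed
    qed
  qed
  then obtain g where g: "\<And>x. x \<in> {a..b} \<Longrightarrow> (\<lambda>n. f n x) sums (g x)"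
    "\<And>x. x \<in> {a..b} \<Longrightarrow> (g has_derivative (\<lambda>h. h *\<^sub>R (\<Sum>i. f' i x))) (at x within {a..b})"
    by blast
  have "(g has_vector_derivative (\<Sum>n. f' n x)) (at x within {a..b})"
    using g(2)[OF x] by (simp add: has_vector_derivative_def)
  moreover have "\<And>y. y \<in> {a..b} \<Longrightarrow> (\<Sum>n. f n y) = g y"
    using g(1) sums_unique by metis
  ultimately show ?thesis
    by (rule has_vector_derivative_transform[OF x, rotated])
qed

primrec PQ :: "(real \<Rightarrow> real) \<Rightarrow> complex \<Rightarrow> nat \<Rightarrow> real \<Rightarrow> complex \<times> complex" where
  "PQ V z 0 = (\<lambda>x. (1, 0))"
| "PQ V z (Suc k) = (\<lambda>x. (integral {0..x} (\<lambda>t. snd (PQ V z k t)),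
                          integral {0..x} (\<lambda>t. (of_real (V t) - z) * fst (PQ V z k t))))"

lemma power_integral:
  fixes x M :: real
  assumes "0 \<le> x"
  shows "((\<lambda>t. M * (M * t) ^ k / fact k) has_integral ((M * x) ^ Suc k / fact (Suc k))) {0..x}"
proof -
  have "((\<lambda>t. M * (M * t) ^ k / fact k) has_integral ((M * x) ^ Suc k / fact (Suc k) - (M * 0) ^ Suc k / fact (Suc k))) {0..x}"
  proof (rule fundamental_theorem_of_calculus[OF assms])
    fix t assume "t \<in> {0..x}"
    have "((\<lambda>t. (M * t) ^ Suc k / fact (Suc k)) has_real_derivative
        (of_nat (Suc k) * (M * t) ^ k * M / fact (Suc k))) (at t within {0..x})"
      by (auto intro!: derivative_eq_intros simp del: fact_Suc power_Suc of_nat_Suc)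
    moreover have "of_nat (Suc k) * (M * t) ^ k * M / fact (Suc k) = M * (M * t) ^ k / fact k"
      by (simp add: fact_Suc field_simps del: of_nat_Suc)
    ultimately have "((\<lambda>t. (M * t) ^ Suc k / fact (Suc k)) has_real_derivative M * (M * t) ^ k / fact k) (at t within {0..x})"
      by (metis (no_types, lifting))
    thus "((\<lambda>t. (M * t) ^ Suc k / fact (Suc k)) has_vector_derivative M * (M * t) ^ k / fact k) (at t within {0..x})"
      by (simp only: has_real_derivative_iff_has_vector_derivative)
  qed
  thus ?thesis by simp
qed

lemma indef_int_cont:
  fixes f :: "real \<Rightarrow> complex"
  assumes "continuous_on {0..pi} f"
  shows "continuous_on {0..pi} (\<lambda>x. integral {0..x} f)"
  by (rule continuous_on_vector_derivative) (rule integral_has_vector_derivative[OF assms])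

locale picard =
  fixes V :: "real \<Rightarrow> real" and z :: complex and M :: real
  assumes Vcont: "continuous_on {0..pi} V"
    and M1: "1 \<le> M"
    and VM: "\<And>t. t \<in> {0..pi} \<Longrightarrow> norm (of_real (V t) - z) \<le> M"
begin

lemma PQ_props:
  "continuous_on {0..pi} (\<lambda>x. fst (PQ V z k x)) \<and> continuous_on {0..pi} (\<lambda>x. snd (PQ V z k x)) \<and>
   (\<forall>x\<in>{0..pi}. norm (fst (PQ V z k x)) \<le> (M * x) ^ k / fact k \<and> norm (snd (PQ V z k x)) \<le> (M * x) ^ k / fact k)"
proof (induction k)
  case 0
  then show ?case by simp
next
  case (Suc k)
  have c1: "continuous_on {0..pi} (\<lambda>x. fst (PQ V z k x))" and c2: "continuous_on {0..pi} (\<lambda>x. snd (PQ V z k x))"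
    and b: "\<And>x. x \<in> {0..pi} \<Longrightarrow> norm (fst (PQ V z k x)) \<le> (M * x) ^ k / fact k \<and> norm (snd (PQ V z k x)) \<le> (M * x) ^ k / fact k"
    using Suc by auto
  have c3: "continuous_on {0..pi} (\<lambda>t. (of_real (V t) - z) * fst (PQ V z k t))"
    by (intro continuous_intros c1 continuous_on_of_real Vcont)
  have bnd: "norm (integral {0..x} h) \<le> (M * x) ^ Suc k / fact (Suc k)"
    if x: "x \<in> {0..pi}" and hc: "continuous_on {0..pi} h"
      and hb: "\<And>t. t \<in> {0..x} \<Longrightarrow> norm (h t) \<le> M * (M * t) ^ k / fact k" for h :: "real \<Rightarrow> complex" and x
  proof -
    have sub: "{0..x} \<subseteq> {0..pi}" using x by auto
    have "norm (integral {0..x} h) \<le> integral {0..x} (\<lambda>t. M * (M * t) ^ k / fact k)"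
      by (rule integral_norm_bound_integral[OF integrable_continuous_interval[OF continuous_on_subset[OF hc sub]]])
         (use power_integral[of x M k] x hb in auto)
    also have "\<dots> = (M * x) ^ Suc k / fact (Suc k)"
      by (rule integral_unique[OF power_integral]) (use x in auto)
    finally show ?thesis .
  qed
  show ?case
  proof (intro conjI ballI)
    show "continuous_on {0..pi} (\<lambda>x. fst (PQ V z (Suc k) x))"
      using indef_int_cont[OF c2] by simp
    show "continuous_on {0..pi} (\<lambda>x. snd (PQ V z (Suc k) x))"
      using indef_int_cont[OF c3] by simp
    fix x assume x: "x \<in> {0..pi}"
    show "norm (fst (PQ V z (Suc k) x)) \<le> (M * x) ^ Suc k / fact (Suc k)"
    proof -
      have "norm (integral {0..x} (\<lambda>t. snd (PQ V z k t))) \<le> (M * x) ^ Suc k / fact (Suc k)"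
      proof (rule bnd[OF x c2])
        fix t assume t: "t \<in> {0..x}"
        hence "t \<in> {0..pi}" using x by auto
        hence "norm (snd (PQ V z k t)) \<le> (M * t) ^ k / fact k" using b by auto
        also have "\<dots> \<le> M * ((M * t) ^ k / fact k)"
        proof -
          have "0 \<le> (M * t) ^ k / fact k" using M1 t by auto
          thus ?thesis using M1 mult_right_mono[of 1 M "(M * t) ^ k / fact k"] by simp
        qed
        finally show "norm (snd (PQ V z k t)) \<le> M * (M * t) ^ k / fact k" by simp
      qed
      thus ?thesis by simp
    qed
    show "norm (snd (PQ V z (Suc k) x)) \<le> (M * x) ^ Suc k / fact (Suc k)"
    proof -
      have "norm (integral {0..x} (\<lambda>t. (of_real (V t) - z) * fst (PQ V z k t))) \<le> (M * x) ^ Suc k / fact (Suc k)"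
      proof (rule bnd[OF x c3])
        fix t assume t: "t \<in> {0..x}"
        hence t': "t \<in> {0..pi}" using x by auto
        have "norm ((of_real (V t) - z) * fst (PQ V z k t)) \<le> M * ((M * t) ^ k / fact k)"
          unfolding norm_mult using VM[OF t'] b[OF t'] M1 by (intro mult_mono) auto
        thus "norm ((of_real (V t) - z) * fst (PQ V z k t)) \<le> M * (M * t) ^ k / fact k" by simp
      qed
      thus ?thesis by simp
    qed
  qed
qed

end



context picard begin

definition EM :: "nat \<Rightarrow> real" where "EM n = (M * pi) ^ n / fact n"

lemma EM_summable: "summable EM"
  using summable_exp[of "M * pi"] by (simp add: EM_def[abs_def] field_simps)

lemma PQ_bound:
  assumes x: "x \<in> {0..pi}"
  shows "norm (fst (PQ V z k x)) \<le> EM k" "norm (snd (PQ V z k x)) \<le> EM k"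
proof -
  have "(M * x) ^ k / fact k \<le> EM k"
    unfolding EM_def using x M1 by (intro divide_right_mono power_mono mult_left_mono) auto
  thus "norm (fst (PQ V z k x)) \<le> EM k" "norm (snd (PQ V z k x)) \<le> EM k"
    using PQ_props[of k] x by (meson order_trans)+
qed

lemma PQ_cont: "continuous_on {0..pi} (\<lambda>x. fst (PQ V z k x))" "continuous_on {0..pi} (\<lambda>x. snd (PQ V z k x))"
  using PQ_props by auto

definition pp :: "real \<Rightarrow> complex" where "pp x = (\<Sum>k. fst (PQ V z k x))"
definition qq :: "real \<Rightarrow> complex" where "qq x = (\<Sum>k. snd (PQ V z k x))"

lemma summable_fst: "x \<in> {0..pi} \<Longrightarrow> summable (\<lambda>k. fst (PQ V z k x))"
  by (rule summable_comparison_test[OF _ EM_summable]) (use PQ_bound in auto)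
lemma summable_snd: "x \<in> {0..pi} \<Longrightarrow> summable (\<lambda>k. snd (PQ V z k x))"
  by (rule summable_comparison_test[OF _ EM_summable]) (use PQ_bound in auto)

definition EM' :: "nat \<Rightarrow> real" where "EM' n = (case n of 0 \<Rightarrow> 0 | Suc k \<Rightarrow> EM k)"

lemma EM'_summable: "summable EM'"
  using EM_summable by (subst summable_Suc_iff[symmetric]) (simp add: EM'_def)

lemma pp_deriv:
  assumes x: "x \<in> {0..pi}"
  shows "(pp has_vector_derivative qq x) (at x within {0..pi})"
proof -
  define f' where "f' n x = (case n of 0 \<Rightarrow> 0 | Suc k \<Rightarrow> snd (PQ V z k x))" for n x
  have "((\<lambda>x. \<Sum>n. fst (PQ V z n x)) has_vector_derivative (\<Sum>n. f' n x)) (at x within {0..pi})"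
  proof (rule series_vderiv[where M = EM'])
    fix n y assume y: "y \<in> {0..pi}"
    show "((\<lambda>x. fst (PQ V z n x)) has_vector_derivative f' n y) (at y within {0..pi})"
    proof (cases n)
      case 0 thus ?thesis by (simp add: f'_def)
    next
      case (Suc k)
      thus ?thesis using integral_has_vector_derivative[OF PQ_cont(2)[of k] y] by (simp add: f'_def)
    qed
    show "norm (f' n y) \<le> EM' n"
      using PQ_bound[OF y] by (cases n) (auto simp: f'_def EM'_def)
  qed (use EM'_summable summable_fst x in auto)
  moreover have "(\<Sum>n. f' n x) = qq x"
  proof -
    have "(\<lambda>n. f' (Suc n) x) sums qq x"
      using summable_snd[OF x] by (simp add: f'_def qq_def summable_sums)
    hence "(\<lambda>n. f' n x) sums (qq x + f' 0 x)" by (rule iffD1[OF sums_Suc_iff[of "\<lambda>n. f' n x"]])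
    thus ?thesis by (simp add: f'_def sums_iff)
  qed
  ultimately show ?thesis unfolding pp_def[abs_def] by simp
qed

lemma qq_deriv:
  assumes x: "x \<in> {0..pi}"
  shows "(qq has_vector_derivative ((of_real (V x) - z) * pp x)) (at x within {0..pi})"
proof -
  define f' where "f' n x = (case n of 0 \<Rightarrow> 0 | Suc k \<Rightarrow> (of_real (V x) - z) * fst (PQ V z k x))" for n x
  have "((\<lambda>x. \<Sum>n. snd (PQ V z n x)) has_vector_derivative (\<Sum>n. f' n x)) (at x within {0..pi})"
  proof (rule series_vderiv[where M = "\<lambda>n. M * EM' n"])
    fix n y assume y: "y \<in> {0..pi}"
    show "((\<lambda>x. snd (PQ V z n x)) has_vector_derivative f' n y) (at y within {0..pi})"
    proof (cases n)
      case 0 thus ?thesis by (simp add: f'_def)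
    next
      case (Suc k)
      have c: "continuous_on {0..pi} (\<lambda>t. (of_real (V t) - z) * fst (PQ V z k t))"
        by (intro continuous_intros PQ_cont continuous_on_of_real Vcont)
      thus ?thesis using integral_has_vector_derivative[OF c y] Suc by (simp add: f'_def)
    qed
    show "norm (f' n y) \<le> M * EM' n"
    proof (cases n)
      case 0 thus ?thesis using M1 by (simp add: f'_def EM'_def)
    next
      case (Suc k)
      have "norm ((of_real (V y) - z) * fst (PQ V z k y)) \<le> M * EM k"
        unfolding norm_mult using VM[OF y] PQ_bound[OF y] M1 by (intro mult_mono) auto
      thus ?thesis using Suc by (simp add: f'_def EM'_def)
    qed
  qed (use EM'_summable summable_snd x in \<open>auto intro: summable_mult\<close>)
  moreover have "(\<Sum>n. f' n x) = (of_real (V x) - z) * pp x"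
  proof -
    have "(\<lambda>n. f' (Suc n) x) sums ((of_real (V x) - z) * pp x)"
      using sums_mult[OF summable_sums[OF summable_fst[OF x]], of "of_real (V x) - z"]
      by (simp add: f'_def pp_def)
    hence "(\<lambda>n. f' n x) sums ((of_real (V x) - z) * pp x + f' 0 x)" by (rule iffD1[OF sums_Suc_iff[of "\<lambda>n. f' n x"]])
    thus ?thesis by (simp add: f'_def sums_iff)
  qed
  ultimately show ?thesis unfolding qq_def[abs_def] by simp
qed

lemma pp0: "pp 0 = 1"
proof -
  have "(\<lambda>n. fst (PQ V z (Suc n) 0)) sums 0" by simp
  hence "(\<lambda>n. fst (PQ V z n 0)) sums (0 + fst (PQ V z 0 0))" by (rule iffD1[OF sums_Suc_iff[of "\<lambda>n. fst (PQ V z n 0)"]])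
  thus ?thesis by (simp add: pp_def sums_iff)
qed

lemma qq0: "qq 0 = 0"
proof -
  have "(\<lambda>n. snd (PQ V z (Suc n) 0)) sums 0" by simp
  hence "(\<lambda>n. snd (PQ V z n 0)) sums (0 + snd (PQ V z 0 0))" by (rule iffD1[OF sums_Suc_iff[of "\<lambda>n. snd (PQ V z n 0)"]])
  thus ?thesis by (simp add: qq_def sums_iff)
qed

end



lemma V_bound:
  fixes V :: "real \<Rightarrow> real"
  assumes "continuous_on {0..pi} V"
  shows "\<exists>B\<ge>0. \<forall>t\<in>{0..pi}. \<bar>V t\<bar> \<le> B"
proof -
  have "bounded (V ` {0..pi})"
    by (rule compact_imp_bounded[OF compact_continuous_image[OF assms compact_Icc]])
  then obtain a where "\<forall>y\<in>V ` {0..pi}. norm y \<le> a" by (auto simp: bounded_iff)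
  hence "\<forall>t\<in>{0..pi}. \<bar>V t\<bar> \<le> a" by auto
  moreover have "0 \<le> a" using \<open>\<forall>t\<in>{0..pi}. \<bar>V t\<bar> \<le> a\<close> by (metis abs_ge_zero atLeastAtMost_iff order_trans pi_ge_zero order_refl)
  ultimately show ?thesis by blast
qed

lemma csqrt_sq: "csqrt z * csqrt z = z"
  using power2_csqrt[of z] by (simp add: power2_eq_square)

lemma xi_props:
  assumes Vcont: "continuous_on {0..pi} V"
  obtains q where
    "\<And>t. t \<in> {0..pi} \<Longrightarrow> ((\<lambda>x. xi V x z) has_vector_derivative q t) (at t within {0..pi})"
    "\<And>t. t \<in> {0..pi} \<Longrightarrow> (q has_vector_derivative ((of_real (V t) - z) * xi V t z)) (at t within {0..pi})"
    "xi V 0 z = 1" "q 0 = 0"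
proof -
  obtain B where B: "0 \<le> B" "\<And>t. t \<in> {0..pi} \<Longrightarrow> \<bar>V t\<bar> \<le> B" using V_bound[OF Vcont] by blast
  define M where "M = max 1 (B + norm z)"
  interpret picard V z M
  proof
    show "continuous_on {0..pi} V" by (rule Vcont)
    show "1 \<le> M" by (simp add: M_def)
    fix t assume t: "t \<in> {0..pi}"
    have "norm (of_real (V t) - z) \<le> norm (of_real (V t) :: complex) + norm z" by (rule norm_triangle_ineq4)
    also have "\<dots> \<le> B + norm z" using B(2)[OF t] by simp
    finally show "norm (of_real (V t) - z) \<le> M" by (simp add: M_def)
  qed
  define sol where "sol x = (if x \<in> {0..pi} then pp x else 0)" for x
  define P where "P f \<longleftrightarrow> f 0 = 1 \<and>
      (\<exists>f'. f' 0 = 0 \<and>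
         (\<forall>t\<in>{0..pi}. (f has_vector_derivative f' t) (at t within {0..pi}) \<and>
                       (f' has_vector_derivative ((complex_of_real (V t) - z) * f t)) (at t within {0..pi}))) \<and>
      (\<forall>t. t \<notin> {0..pi} \<longrightarrow> f t = 0)" for f :: "real \<Rightarrow> complex"
  have dsol: "(sol has_vector_derivative qq t) (at t within {0..pi})" if t: "t \<in> {0..pi}" for t
    by (rule has_vector_derivative_transform[OF t _ pp_deriv[OF t]]) (simp add: sol_def)
  have dqq: "(qq has_vector_derivative ((of_real (V t) - z) * sol t)) (at t within {0..pi})"
    if t: "t \<in> {0..pi}" for t
    using qq_deriv[OF t] t by (simp add: sol_def)
  have Psol: "P sol"
    unfolding P_def using dsol dqq pp0 qq0 by (auto simp: sol_def intro!: exI[of _ qq])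
  have uniq: "f = sol" if Pf: "P f" for f
  proof
    fix x
    show "f x = sol x"
    proof (cases "x \<in> {0..pi}")
      case False thus ?thesis using Pf unfolding P_def sol_def by (simp only: if_False) blast
    next
      case x: True
      from Pf obtain f' where f': "f 0 = 1" "f' 0 = 0"
        "\<And>t. t \<in> {0..pi} \<Longrightarrow> (f has_vector_derivative f' t) (at t within {0..pi})"
        "\<And>t. t \<in> {0..pi} \<Longrightarrow> (f' has_vector_derivative ((complex_of_real (V t) - z) * f t)) (at t within {0..pi})"
        unfolding P_def by blast
      interpret d: ode_solB V z "csqrt z" "\<lambda>t. f t - pp t" "\<lambda>t. f' t - qq t" B
      proof
        show "csqrt z * csqrt z = z" by (rule csqrt_sq)
        fix t assume t: "t \<in> {0..pi}"
        show "((\<lambda>t. f t - pp t) has_vector_derivative f' t - qq t) (at t within {0..pi})"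
          by (intro has_vector_derivative_diff f'(3) pp_deriv t)
        have "((\<lambda>t. f' t - qq t) has_vector_derivative
            ((complex_of_real (V t) - z) * f t - (complex_of_real (V t) - z) * pp t)) (at t within {0..pi})"
          by (intro has_vector_derivative_diff f'(4) qq_deriv t)
        thus "((\<lambda>t. f' t - qq t) has_vector_derivative (complex_of_real (V t) - z) * (f t - pp t)) (at t within {0..pi})"
          by (simp add: algebra_simps)
        show "\<bar>V t\<bar> \<le> B" by (rule B(2)[OF t])
      qed (rule Vcont)
      have "norm (f x - pp x) \<le> 0"
        using d.sol_bound[OF x] by (simp add: f' pp0 qq0)
      thus ?thesis using x by (simp add: sol_def)
    qed
  qed
  have the: "(THE f. P f) = sol"
    using Psol uniq by (rule the_equality[where P=P])
  have xi_sol: "xi V x z = sol x" for x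
    using the unfolding xi_def P_def by simp
  show ?thesis
  proof (rule that[of qq])
    fix t assume t: "t \<in> {0..pi}"
    show "((\<lambda>x. xi V x z) has_vector_derivative qq t) (at t within {0..pi})"
      using dsol[OF t] by (simp add: xi_sol)
    show "(qq has_vector_derivative (complex_of_real (V t) - z) * xi V t z) (at t within {0..pi})"
      using dqq[OF t] by (simp add: xi_sol)
  qed (simp_all add: xi_sol sol_def pp0 qq0)
qed



lemma sin_vd: "((\<lambda>x. complex_of_real (sin (real n * x))) has_vector_derivative
     complex_of_real (real n * cos (real n * x))) (at x within S)"
  by (auto intro!: derivative_eq_intros)

lemma cos_vd: "((\<lambda>x. complex_of_real (cos (real n * x))) has_vector_derivative
     complex_of_real (- real n * sin (real n * x))) (at x within S)"
  by (auto intro!: derivative_eq_intros)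

lemma ibp_sin:
  fixes f f' :: "real \<Rightarrow> complex"
  assumes b: "0 \<le> b" and n: "1 \<le> n"
    and df: "\<And>x. x \<in> {0..b} \<Longrightarrow> (f has_vector_derivative f' x) (at x within {0..b})"
    and cf': "continuous_on {0..b} f'"
    and fA: "\<And>x. x \<in> {0..b} \<Longrightarrow> norm (f x) \<le> A"
    and f'A: "\<And>x. x \<in> {0..b} \<Longrightarrow> norm (f' x) \<le> A'"
  shows "norm (integral {0..b} (\<lambda>x. f x * complex_of_real (sin (real n * x)))) \<le> (2 * A + b * A') / real n"
proof -
  have n0: "real n > 0" using n by simp
  define G where "G x = - (f x * complex_of_real (cos (real n * x))) / of_real (real n)" for x
  define G' where "G' x = - (f x * complex_of_real (- real n * sin (real n * x)) + f' x * complex_of_real (cos (real n * x))) / of_real (real n)" for x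
  have "(G' has_integral (G b - G 0)) {0..b}"
  proof (rule fundamental_theorem_of_calculus[OF b])
    fix x assume x: "x \<in> {0..b}"
    show "(G has_vector_derivative G' x) (at x within {0..b})"
      unfolding G_def[abs_def] G'_def
      by (intro has_vector_derivative_divide has_vector_derivative_minus has_vector_derivative_mult df[OF x] cos_vd)
  qed
  moreover have int2: "((\<lambda>x. f' x * complex_of_real (cos (real n * x)) / of_real (real n)) has_integral
      integral {0..b} (\<lambda>x. f' x * complex_of_real (cos (real n * x)) / of_real (real n))) {0..b}"
    by (intro integrable_integral integrable_continuous_interval continuous_intros cf') (use n in auto)
  ultimately have "((\<lambda>x. G' x + f' x * complex_of_real (cos (real n * x)) / of_real (real n)) has_integral
      (G b - G 0 + integral {0..b} (\<lambda>x. f' x * complex_of_real (cos (real n * x)) / of_real (real n)))) {0..b}"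
    by (rule has_integral_add)
  moreover have "\<And>x. G' x + f' x * complex_of_real (cos (real n * x)) / of_real (real n) = f x * complex_of_real (sin (real n * x))"
    using n0 by (simp add: G'_def field_simps)
  ultimately have I: "integral {0..b} (\<lambda>x. f x * complex_of_real (sin (real n * x))) =
      G b - G 0 + integral {0..b} (\<lambda>x. f' x * complex_of_real (cos (real n * x)) / of_real (real n))"
    by (simp add: integral_unique)
  have nG: "norm (G x) \<le> A / real n" if "x \<in> {0..b}" for x
  proof -
    have "norm (G x) = norm (f x) * \<bar>cos (real n * x)\<bar> / real n"
      by (simp add: G_def norm_mult norm_divide)
    also have "\<dots> \<le> norm (f x) * 1 / real n"
      using n0 by (intro divide_right_mono mult_left_mono) auto
    also have "\<dots> \<le> A / real n" using fA[OF that] n0 by (simp add: divide_right_mono)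
    finally show ?thesis .
  qed
  have "norm (integral {0..b} (\<lambda>x. f' x * complex_of_real (cos (real n * x)) / of_real (real n)))
      \<le> A' / real n * Henstock_Kurzweil_Integration.content (cbox 0 b)"
  proof (rule has_integral_bound[where f = "\<lambda>x. f' x * complex_of_real (cos (real n * x)) / of_real (real n)"])
    have "0 \<le> A'" using f'A[of 0] b by (meson atLeastAtMost_iff norm_ge_zero order_trans order_refl)
    thus "0 \<le> A' / real n" using n0 by simp
    show "((\<lambda>x. f' x * complex_of_real (cos (real n * x)) / complex_of_real (real n)) has_integral
      integral {0..b} (\<lambda>x. f' x * complex_of_real (cos (real n * x)) / complex_of_real (real n))) (cbox 0 b)"
      using int2 by simp
    fix x assume x: "x \<in> cbox 0 b"
    have "norm (f' x * complex_of_real (cos (real n * x)) / of_real (real n)) = norm (f' x) * \<bar>cos (real n * x)\<bar> / real n"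
      by (simp add: norm_mult norm_divide)
    also have "\<dots> \<le> norm (f' x) * 1 / real n"
      using n0 by (intro divide_right_mono mult_left_mono) auto
    also have "\<dots> \<le> A' / real n" using f'A x n0 by (simp add: divide_right_mono)
    finally show "norm (f' x * complex_of_real (cos (real n * x)) / of_real (real n)) \<le> A' / real n" .
  qed
  hence n2: "norm (integral {0..b} (\<lambda>x. f' x * complex_of_real (cos (real n * x)) / of_real (real n))) \<le> b * A' / real n"
    using b by (simp add: mult.commute)
  have "norm (integral {0..b} (\<lambda>x. f x * complex_of_real (sin (real n * x))))
     \<le> norm (G b) + norm (G 0) + b * A' / real n"
    unfolding I using n2 by (smt (verit) norm_triangle_ineq norm_triangle_ineq4)
  also have "\<dots> \<le> A / real n + A / real n + b * A' / real n"
    using nG[of b] nG[of 0] b by auto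
  also have "\<dots> = (2 * A + b * A') / real n" by (simp add: add_divide_distrib)
  finally show ?thesis .
qed

lemma ibp_cos_pi:
  fixes f f' :: "real \<Rightarrow> complex"
  assumes n: "1 \<le> n"
    and df: "\<And>x. x \<in> {0..pi} \<Longrightarrow> (f has_vector_derivative f' x) (at x within {0..pi})"
    and cf': "continuous_on {0..pi} f'"
  shows "integral {0..pi} (\<lambda>x. f x * complex_of_real (cos (real n * x))) =
       - integral {0..pi} (\<lambda>x. f' x * complex_of_real (sin (real n * x))) / of_real (real n)"
proof -
  have n0: "real n > 0" using n by simp
  define H where "H x = f x * complex_of_real (sin (real n * x)) / of_real (real n)" for x
  define H' where "H' x = (f x * complex_of_real (real n * cos (real n * x)) + f' x * complex_of_real (sin (real n * x))) / of_real (real n)" for x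
  have "(H' has_integral (H pi - H 0)) {0..pi}"
  proof (rule fundamental_theorem_of_calculus)
    fix x assume x: "x \<in> {0..pi}"
    show "(H has_vector_derivative H' x) (at x within {0..pi})"
      unfolding H_def[abs_def] H'_def
      by (intro has_vector_derivative_divide has_vector_derivative_mult df[OF x] sin_vd)
  qed simp
  moreover have "H pi = 0" "H 0 = 0" by (simp_all add: H_def sin_npi)
  ultimately have h1: "(H' has_integral 0) {0..pi}" by simp
  have int2: "((\<lambda>x. - (f' x * complex_of_real (sin (real n * x))) / of_real (real n)) has_integral
      integral {0..pi} (\<lambda>x. - (f' x * complex_of_real (sin (real n * x))) / of_real (real n))) {0..pi}"
    by (intro integrable_integral integrable_continuous_interval continuous_intros cf') (use n in auto)
  have "((\<lambda>x. H' x + - (f' x * complex_of_real (sin (real n * x))) / of_real (real n)) has_integral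
      (0 + integral {0..pi} (\<lambda>x. - (f' x * complex_of_real (sin (real n * x))) / of_real (real n)))) {0..pi}"
    by (rule has_integral_add[OF h1 int2])
  moreover have "\<And>x. H' x + - (f' x * complex_of_real (sin (real n * x))) / of_real (real n) = f x * complex_of_real (cos (real n * x))"
    using n0 by (simp add: H'_def field_simps)
  ultimately have "integral {0..pi} (\<lambda>x. f x * complex_of_real (cos (real n * x))) =
      integral {0..pi} (\<lambda>x. - (f' x * complex_of_real (sin (real n * x))) / of_real (real n))"
    by (simp add: integral_unique)
  also have "\<dots> = - integral {0..pi} (\<lambda>x. f' x * complex_of_real (sin (real n * x))) / of_real (real n)"
    by (simp add: integral_neg integral_divide)
  finally show ?thesis .
qed



lemma ac_cont:
  assumes V_ac: "absolutely_continuous_on {0..pi} V"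
  shows "continuous_on {0..pi} V"
  unfolding continuous_on_iff
proof (intro ballI allI impI)
  fix x e :: real assume x: "x \<in> {0..pi}" and e: "0 < e"
  obtain d where d: "d > 0" and H: "\<And>I :: (real \<times> real) set.
        finite I \<and> (\<forall>(a,b)\<in>I. a \<le> b \<and> {a..b} \<subseteq> {0..pi}) \<and>
        pairwise (\<lambda>(a,b) (c,d). {a<..<b} \<inter> {c<..<d} = {}) I \<and>
        (\<Sum>(a,b)\<in>I. b - a) < d
        \<Longrightarrow> (\<Sum>(a,b)\<in>I. \<bar>V b - V a\<bar>) < e"
    using V_ac e unfolding absolutely_continuous_on_def by meson
  show "\<exists>d>0. \<forall>x'\<in>{0..pi}. dist x' x < d \<longrightarrow> dist (V x') (V x) < e"
  proof (intro exI[of _ d] conjI ballI impI d)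
    fix x' assume x': "x' \<in> {0..pi}" and dx: "dist x' x < d"
    have "(\<Sum>(a,b)\<in>{(min x x', max x x')}. \<bar>V b - V a\<bar>) < e"
      by (rule H) (use x x' dx in \<open>auto simp: dist_real_def\<close>)
    thus "dist (V x') (V x) < e"
      by (cases "x \<le> x'") (auto simp: dist_real_def min_def max_def abs_minus_commute)
  qed
qed

lemma int_V_bound:
  fixes V :: "real \<Rightarrow> real"
  assumes Vcont: "continuous_on {0..pi} V" and VB: "\<And>t. t \<in> {0..pi} \<Longrightarrow> \<bar>V t\<bar> \<le> B"
    and B: "0 \<le> B" and x: "x \<in> {0..pi}"
  shows "\<bar>integral {0..x} V\<bar> \<le> B * x"
proof -
  have "(V has_integral integral {0..x} V) (cbox 0 x)"
    by (simp add: integrable_integral integrable_continuous_interval continuous_on_subset[OF Vcont] x)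
      (rule integrable_integral, rule integrable_continuous_interval, rule continuous_on_subset[OF Vcont], use x in auto)
  from has_integral_bound[OF B this] show ?thesis using x VB by auto
qed

lemma rho_facts:
  fixes V :: "real \<Rightarrow> real"
  assumes Vcont: "continuous_on {0..pi} V" and VB: "\<And>t. t \<in> {0..pi} \<Longrightarrow> \<bar>V t\<bar> \<le> B"
    and B: "0 \<le> B"
  defines "r' \<equiv> \<lambda>x. complex_of_real (V x / 2 - integral {0..pi} V / (2 * pi))"
  shows "\<And>x. x \<in> {0..pi} \<Longrightarrow> ((\<lambda>x. complex_of_real (rho V x)) has_vector_derivative r' x) (at x within {0..pi})"
    and "continuous_on {0..pi} r'"
    and "\<And>x. x \<in> {0..pi} \<Longrightarrow> norm (r' x) \<le> B"
    and "\<And>x. x \<in> {0..pi} \<Longrightarrow> norm (complex_of_real (rho V x)) \<le> pi * B"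
proof -
  fix x assume x: "x \<in> {0..pi}"
  have "((\<lambda>u. integral {0..u} V) has_real_derivative V x) (at x within {0..pi})"
    using integral_has_vector_derivative[OF Vcont x] by (simp add: has_real_derivative_iff_has_vector_derivative)
  hence "((\<lambda>x. rho V x) has_real_derivative (V x / 2 - integral {0..pi} V / (2 * pi))) (at x within {0..pi})"
    unfolding rho_def by (auto intro!: derivative_eq_intros)
  thus "((\<lambda>x. complex_of_real (rho V x)) has_vector_derivative r' x) (at x within {0..pi})"
    unfolding r'_def by (rule has_vector_derivative_of_real)
next
  show "continuous_on {0..pi} r'" unfolding r'_def by (intro continuous_intros Vcont) auto
next
  fix x assume x: "x \<in> {0..pi}"
  have "\<bar>integral {0..pi} V\<bar> \<le> B * pi" by (rule int_V_bound[OF Vcont VB B]) auto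
  hence "\<bar>integral {0..pi} V / (2 * pi)\<bar> \<le> B / 2" by (simp add: abs_divide field_simps)
  moreover have "\<bar>V x / 2\<bar> \<le> B / 2" using VB[OF x] by simp
  moreover have "\<bar>V x / 2 - integral {0..pi} V / (2 * pi)\<bar> \<le> \<bar>V x / 2\<bar> + \<bar>integral {0..pi} V / (2 * pi)\<bar>"
    by (rule abs_triangle_ineq4)
  ultimately have "\<bar>V x / 2 - integral {0..pi} V / (2 * pi)\<bar> \<le> B" by argo
  thus "norm (r' x) \<le> B" unfolding r'_def by (simp only: norm_of_real)
next
  fix x assume x: "x \<in> {0..pi}"
  have i1: "\<bar>integral {0..x} V\<bar> \<le> B * x" by (rule int_V_bound[OF Vcont VB B x])
  have i2: "\<bar>integral {0..pi} V\<bar> \<le> B * pi" by (rule int_V_bound[OF Vcont VB B]) auto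
  have "\<bar>x / (2*pi) * integral {0..pi} V\<bar> = x / (2*pi) * \<bar>integral {0..pi} V\<bar>"
    using x by (simp add: abs_mult)
  also have "\<dots> \<le> x / (2*pi) * (B * pi)" using x i2 by (intro mult_left_mono) auto
  also have "\<dots> = B * x / 2" by simp
  finally have a2: "\<bar>x / (2*pi) * integral {0..pi} V\<bar> \<le> B * x / 2" .
  have "\<bar>rho V x\<bar> \<le> B * x / 2 + B * x / 2"
  proof -
    have "\<bar>rho V x\<bar> \<le> \<bar>1/2 * integral {0..x} V\<bar> + \<bar>x / (2*pi) * integral {0..pi} V\<bar>"
      unfolding rho_def by (rule abs_triangle_ineq4)
    moreover have "\<bar>1/2 * integral {0..x} V\<bar> \<le> B * x / 2" using i1 by simp
    ultimately show ?thesis using a2 by linarith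
  qed
  also have "\<dots> \<le> pi * B" using x B by (simp add: mult.commute mult_left_mono)
  finally show "norm (complex_of_real (rho V x)) \<le> pi * B" by simp
qed



lemma exp_prod_le:
  assumes "0 \<le> \<tau>" "x \<le> pi"
  shows "exp (\<tau> * (x - t)) * exp (\<tau> * t) \<le> exp (pi * \<tau>)"
proof -
  have "exp (\<tau> * (x - t)) * exp (\<tau> * t) = exp (\<tau> * x)" by (simp add: mult_exp_exp algebra_simps)
  also have "\<dots> \<le> exp (pi * \<tau>)" using assms mult_left_mono[of x pi \<tau>] by (simp add: mult.commute)
  finally show ?thesis .
qed

lemma F_facts:
  fixes V :: "real \<Rightarrow> real" and z :: complex
  assumes Vcont: "continuous_on {0..pi} V" and VB: "\<And>t. t \<in> {0..pi} \<Longrightarrow> \<bar>V t\<bar> \<le> B"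
    and B: "0 \<le> B"
  obtains Fp Fpp where
   "\<And>x. x \<in> {0..pi} \<Longrightarrow> ((\<lambda>x. F V x z) has_vector_derivative Fp x) (at x within {0..pi})"
   "\<And>x. x \<in> {0..pi} \<Longrightarrow> (Fp has_vector_derivative Fpp x) (at x within {0..pi})"
   "continuous_on {0..pi} Fpp"
   "\<And>x. x \<in> {0..pi} \<Longrightarrow> norm (F V x z) \<le> (exp (pi*pi*B) + 1) * exp (pi * \<bar>Im (csqrt z)\<bar>)"
   "\<And>x. x \<in> {0..pi} \<Longrightarrow> norm (Fp x) \<le> pi * B * exp (pi*pi*B) * exp (pi * \<bar>Im (csqrt z)\<bar>)"
   "\<And>x. x \<in> {0..pi} \<Longrightarrow> norm (Fpp x) \<le> B * exp (pi*pi*B) * exp (pi * \<bar>Im (csqrt z)\<bar>)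
        + sqrt (norm z) * (pi * B * exp (pi*pi*B) * exp (pi * \<bar>Im (csqrt z)\<bar>))"
proof -
  define w where "w = csqrt z"
  define \<tau> where "\<tau> = \<bar>Im w\<bar>"
  define E where "E = exp (pi * \<tau>)"
  define K where "K = exp (pi*pi*B)"
  have tau0: "0 \<le> \<tau>" by (simp add: \<tau>_def)
  have E0: "0 \<le> E" by (simp add: E_def)
  have K0: "0 \<le> K" by (simp add: K_def)
  obtain q where q:
    "\<And>t. t \<in> {0..pi} \<Longrightarrow> ((\<lambda>x. xi V x z) has_vector_derivative q t) (at t within {0..pi})"
    "\<And>t. t \<in> {0..pi} \<Longrightarrow> (q has_vector_derivative ((of_real (V t) - z) * xi V t z)) (at t within {0..pi})"
    "xi V 0 z = 1" "q 0 = 0"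
    using xi_props[OF Vcont, of z] by blast
  interpret s: ode_solB V z w "\<lambda>x. xi V x z" q B
  proof
    show "w * w = z" by (simp add: w_def csqrt_sq)
  qed (use q Vcont VB in auto)
  have xib: "norm (xi V t z) \<le> K * exp (\<tau> * t)" if t: "t \<in> {0..pi}" for t
    using s.sol_bound[OF t] q(3,4) by (simp add: K_def \<tau>_def)
  have Fdef: "F V x z = xi V x z - Cf w x" for x by (simp add: F_def Cf_def w_def)
  define Fp where "Fp x = q x + z * Sf w x" for x
  define Fpp where "Fpp x = (of_real (V x) - z) * xi V x z + z * Cf w x" for x
  have Cfc: "continuous_on {0..pi} (Cf w)"
    by (rule continuous_on_vector_derivative) (rule Cf_deriv)
  show ?thesis
  proof (rule that[of Fp Fpp])
    fix x assume x: "x \<in> {0..pi}"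
    have "((\<lambda>x. xi V x z - Cf w x) has_vector_derivative (q x - (- (w*w) * Sf w x))) (at x within {0..pi})"
      by (intro has_vector_derivative_diff q(1)[OF x] Cf_deriv)
    thus "((\<lambda>x. F V x z) has_vector_derivative Fp x) (at x within {0..pi})"
      by (simp add: Fdef Fp_def s.ww)
    have "((\<lambda>x. q x + z * Sf w x) has_vector_derivative ((of_real (V x) - z) * xi V x z + z * Cf w x)) (at x within {0..pi})"
      by (intro has_vector_derivative_add has_vector_derivative_mult_right q(2)[OF x] Sf_deriv)
    thus "(Fp has_vector_derivative Fpp x) (at x within {0..pi})"
      by (simp add: Fp_def[abs_def] Fpp_def)
  next
    show "continuous_on {0..pi} Fpp"
      unfolding Fpp_def[abs_def] by (intro continuous_intros Vcont s.g_cont Cfc)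
  next
    fix x assume x: "x \<in> {0..pi}"
    have ex: "exp (\<tau> * x) \<le> E" using x tau0 mult_left_mono[of x pi \<tau>] by (simp add: E_def mult.commute)
    have "norm (F V x z) \<le> norm (xi V x z) + norm (Cf w x)" unfolding Fdef by (rule norm_triangle_ineq4)
    also have "\<dots> \<le> K * E + E"
      using xib[OF x] ex Cf_bound[of w x] x K0 by (smt (verit, best) \<tau>_def atLeastAtMost_iff abs_of_nonneg mult_left_mono)
    finally show "norm (F V x z) \<le> (exp (pi*pi*B) + 1) * exp (pi * \<bar>Im (csqrt z)\<bar>)"
      by (simp add: K_def E_def \<tau>_def w_def algebra_simps)
  next
    fix x assume x: "x \<in> {0..pi}"
    have vi: "((\<lambda>t. Cf w (x - t) * (of_real (V t) * xi V t z)) has_integral Fp x) {0..x}"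
      using s.volterra'[OF x] q(3,4) by (simp add: Fp_def)
    have "norm (Fp x) \<le> B * K * E * Henstock_Kurzweil_Integration.content (cbox 0 x)"
    proof (rule has_integral_bound)
      show "0 \<le> B * K * E" using B K0 E0 by simp
      show "((\<lambda>t. Cf w (x - t) * (of_real (V t) * xi V t z)) has_integral Fp x) (cbox 0 x)" using vi by simp
      fix t assume t: "t \<in> cbox 0 x"
      hence t': "t \<in> {0..pi}" using x by auto
      have "norm (Cf w (x - t)) \<le> exp (\<tau> * (x - t))" using Cf_bound[of w "x - t"] t by (simp add: \<tau>_def)
      moreover have "norm (of_real (V t) * xi V t z) \<le> B * (K * exp (\<tau> * t))"
        unfolding norm_mult using VB[OF t'] xib[OF t'] by (intro mult_mono) auto
      ultimately have "norm (Cf w (x - t)) * norm (of_real (V t) * xi V t z) \<le> exp (\<tau> * (x - t)) * (B * (K * exp (\<tau> * t)))"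
        by (intro mult_mono) auto
      also have "\<dots> = B * K * (exp (\<tau> * (x - t)) * exp (\<tau> * t))" by simp
      also have "\<dots> \<le> B * K * E"
        using exp_prod_le[OF tau0, of x t] x B K0 by (auto simp: E_def intro!: mult_left_mono)
      finally show "norm (Cf w (x - t) * (of_real (V t) * xi V t z)) \<le> B * K * E" by (simp add: norm_mult)
    qed
    also have "\<dots> \<le> B * K * E * pi" using x B K0 E0 by (auto intro!: mult_left_mono)
    finally show "norm (Fp x) \<le> pi * B * exp (pi*pi*B) * exp (pi * \<bar>Im (csqrt z)\<bar>)"
      by (simp add: K_def E_def \<tau>_def w_def algebra_simps)
  next
    fix x assume x: "x \<in> {0..pi}"
    have vi: "((\<lambda>t. z * (Sf w (x - t) * (of_real (V t) * xi V t z))) has_integral z * F V x z) {0..x}"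
      using has_integral_mult_right[OF s.volterra[OF x], of z] q(3,4) by (simp add: Fdef)
    have "norm (z * F V x z) \<le> norm w * B * K * E * Henstock_Kurzweil_Integration.content (cbox 0 x)"
    proof (rule has_integral_bound)
      show "0 \<le> norm w * B * K * E" using B K0 E0 by simp
      show "((\<lambda>t. z * (Sf w (x - t) * (of_real (V t) * xi V t z))) has_integral z * F V x z) (cbox 0 x)" using vi by simp
      fix t assume t: "t \<in> cbox 0 x"
      hence t': "t \<in> {0..pi}" using x by auto
      have zz: "z * (Sf w (x - t) * (of_real (V t) * xi V t z)) = w * ((w * Sf w (x - t)) * (of_real (V t) * xi V t z))"
        using s.ww by (simp add: algebra_simps)
      have "norm (w * Sf w (x - t)) \<le> exp (\<tau> * (x - t))" using wSf_bound[of w "x - t"] t by (simp add: \<tau>_def)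
      moreover have "norm (of_real (V t) * xi V t z) \<le> B * (K * exp (\<tau> * t))"
        unfolding norm_mult using VB[OF t'] xib[OF t'] by (intro mult_mono) auto
      ultimately have "norm (w * Sf w (x - t)) * norm (of_real (V t) * xi V t z) \<le> exp (\<tau> * (x - t)) * (B * (K * exp (\<tau> * t)))"
        by (intro mult_mono) auto
      also have "\<dots> = B * K * (exp (\<tau> * (x - t)) * exp (\<tau> * t))" by simp
      also have "\<dots> \<le> B * K * E"
        using exp_prod_le[OF tau0, of x t] x B K0 by (auto simp: E_def intro!: mult_left_mono)
      finally have "norm (w * Sf w (x - t)) * norm (of_real (V t) * xi V t z) \<le> B * K * E" .
      hence "norm w * (norm (w * Sf w (x - t)) * norm (of_real (V t) * xi V t z)) \<le> norm w * (B * K * E)"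
        by (intro mult_left_mono) auto
      thus "norm (z * (Sf w (x - t) * (of_real (V t) * xi V t z))) \<le> norm w * B * K * E"
        unfolding zz by (simp add: norm_mult mult_ac)
    qed
    also have "\<dots> \<le> norm w * B * K * E * pi" using x B K0 E0 by (auto intro!: mult_left_mono)
    finally have zF: "norm (z * F V x z) \<le> norm w * (pi * B * K * E)" by (simp add: mult_ac)
    have "Fpp x = of_real (V x) * xi V x z - z * F V x z" by (simp add: Fpp_def Fdef algebra_simps)
    hence "norm (Fpp x) \<le> norm (of_real (V x) * xi V x z) + norm (z * F V x z)"
      by (simp add: norm_triangle_ineq4)
    also have "norm (of_real (V x) * xi V x z) \<le> B * K * E"
    proof -
      have ex: "exp (\<tau> * x) \<le> E" using x tau0 mult_left_mono[of x pi \<tau>] by (simp add: E_def mult.commute)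
      have "norm (of_real (V x) * xi V x z) \<le> B * (K * exp (\<tau> * x))"
        unfolding norm_mult using VB[OF x] xib[OF x] by (intro mult_mono) auto
      also have "\<dots> \<le> B * (K * E)" using ex B K0 by (intro mult_left_mono) auto
      finally show ?thesis by simp
    qed
    finally show "norm (Fpp x) \<le> B * exp (pi*pi*B) * exp (pi * \<bar>Im (csqrt z)\<bar>)
        + sqrt (norm z) * (pi * B * exp (pi*pi*B) * exp (pi * \<bar>Im (csqrt z)\<bar>))"
      using zF by (simp add: K_def E_def \<tau>_def w_def)
  qed
qed



lemma key_ineq: fixes W :: real assumes W: "0 \<le> W" shows "1 + W \<le> (2+pi) * (1 + W^2/(1+pi*W))"
proof -
  have p: "1 + pi * W > 0" using W by (simp add: add_pos_nonneg)
  have e: "1 + W^2/(1+pi*W) = (1+pi*W+W^2)/(1+pi*W)" using p by (simp add: field_simps)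
  have "(1+W)*(1+pi*W) \<le> (2+pi)*(1+pi*W+W^2)"
  proof -
    have a: "0 \<le> pi*W" "0 \<le> pi*(pi*W)" "0 \<le> W*W" "0 \<le> pi*(W*W)" "W \<le> pi * W"
      using W pi_ge_two by (auto intro!: mult_right_mono[of 1 pi W, simplified])
    have "(1+W)*(1+pi*W) = 1 + W + pi*W + pi*(W*W)" by (simp add: algebra_simps)
    moreover have "(2+pi)*(1+pi*W+W^2) = 2 + pi + 2*(pi*W) + pi*(pi*W) + 2*(W*W) + pi*(W*W)"
      by (simp add: algebra_simps power2_eq_square)
    ultimately show ?thesis using a pi_ge_two by linarith
  qed
  hence "1 + W \<le> (2+pi)*(1+pi*W+W^2)/(1+pi*W)" using p by (simp add: pos_le_divide_eq)
  thus ?thesis by (simp add: e)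
qed

lemma R_ineq:
  fixes z :: complex
  shows "1 + sqrt (cmod z) \<le> (2+pi) * (1 + cmod z / (1 + pi * sqrt (cmod z)))"
    and "1 + cmod z / (1 + pi * sqrt (cmod z)) \<le> 1 + (1 + cmod z) / (1 + pi * sqrt (cmod z))"
    and "1 \<le> 1 + 1 / (1 + pi * sqrt (cmod z))"
proof -
  have p: "1 + pi * sqrt (cmod z) > 0" by (simp add: add_pos_nonneg)
  show "1 + sqrt (cmod z) \<le> (2+pi) * (1 + cmod z / (1 + pi * sqrt (cmod z)))"
    using key_ineq[of "sqrt (cmod z)"] by simp
  show "1 + cmod z / (1 + pi * sqrt (cmod z)) \<le> 1 + (1 + cmod z) / (1 + pi * sqrt (cmod z))"
    using p by (simp add: divide_right_mono)
  show "1 \<le> 1 + 1 / (1 + pi * sqrt (cmod z))" using p by simp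
qed

lemma arith1:
  fixes P P' E W R :: real
  assumes "0 \<le> P" "P \<le> P'" "0 \<le> E" "0 \<le> W" "1 + W \<le> (2+pi)*R"
  shows "P*E*(3*pi + pi^2*W) \<le> P' * (3*pi+pi^2)*(2+pi) * E * R"
proof -
  have "3*pi + pi^2*W \<le> (3*pi+pi^2)*(1+W)"
    using assms(4) by (simp add: algebra_simps)
  also have "\<dots> \<le> (3*pi+pi^2)*((2+pi)*R)" using assms(5) by (intro mult_left_mono) auto
  finally have h: "3*pi + pi^2*W \<le> (3*pi+pi^2)*((2+pi)*R)" .
  have "P*E*(3*pi + pi^2*W) \<le> P'*E*((3*pi+pi^2)*((2+pi)*R))"
    using assms by (intro mult_mono h) (auto intro: mult_right_mono)
  thus ?thesis by (simp add: mult_ac)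
qed



theorem lemmaA4:
  fixes V :: "real \<Rightarrow> real" and a :: real
  assumes V_ac: "absolutely_continuous_on {0..pi} V"
    and a_pos: "0 < a" and a_le: "a \<le> pi"
  shows "\<exists>C1>0. \<exists>C2>0. \<exists>C3>0. \<forall>(z::complex) (n::nat). n \<ge> 1 \<longrightarrow>
     cmod (integral {0..pi} (\<lambda>x. F V x z * complex_of_real (cos (real n * x))))
       \<le> C1 * exp (pi * \<bar>Im (csqrt z)\<bar>) / (real n)^2
            * (1 + (1 + cmod z) / (1 + pi * sqrt (cmod z)))
   \<and> cmod (integral {0..a} (\<lambda>x. complex_of_real (rho V x) * cos (csqrt z * complex_of_real x)
                                  * complex_of_real (sin (real n * x))))
       \<le> C2 * exp (pi * \<bar>Im (csqrt z)\<bar>) / real n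
            * (1 + cmod z / (1 + pi * sqrt (cmod z)))
   \<and> cmod (integral {0..a} (\<lambda>x. complex_of_real (rho V x) * F V x z
                                  * complex_of_real (sin (real n * x))))
       \<le> C3 * exp (pi * \<bar>Im (csqrt z)\<bar>) / real n
            * (1 + 1 / (1 + pi * sqrt (cmod z)))"
proof -
  have Vcont: "continuous_on {0..pi} V" by (rule ac_cont[OF V_ac])
  obtain B where B: "0 \<le> B" "\<And>t. t \<in> {0..pi} \<Longrightarrow> \<bar>V t\<bar> \<le> B" using V_bound[OF Vcont] by blast
  define K where "K = exp (pi*pi*B)"
  have K0: "0 \<le> K" by (simp add: K_def)
  define r' where "r' = (\<lambda>x. complex_of_real (V x / 2 - integral {0..pi} V / (2 * pi)))"
  have rf1: "((\<lambda>x. complex_of_real (rho V x)) has_vector_derivative r' x) (at x within {0..pi})"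
    if "x \<in> {0..pi}" for x
    unfolding r'_def by (rule rho_facts(1)[OF Vcont, of B]) (use B that in auto)
  have rf2: "continuous_on {0..pi} r'"
    unfolding r'_def by (rule rho_facts(2)[OF Vcont, of B]) (use B in auto)
  have rf3: "norm (r' x) \<le> B" if "x \<in> {0..pi}" for x
    unfolding r'_def by (rule rho_facts(3)[OF Vcont, of B]) (use B that in auto)
  have rf4: "norm (complex_of_real (rho V x)) \<le> pi * B" if "x \<in> {0..pi}" for x
    by (rule rho_facts(4)[OF Vcont, of B]) (use B that in auto)
  note rf = rf1 rf2 rf3 rf4
  have rhoc: "continuous_on {0..pi} (\<lambda>x. complex_of_real (rho V x))"
    by (rule continuous_on_vector_derivative) (rule rf(1))
  have sub: "{0..a} \<subseteq> {0..pi}" using a_le by auto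
  have a0: "0 \<le> a" using a_pos by simp
  define C1 where "C1 = (B+1)*(K+1) * (3*pi+pi^2)*(2+pi)"
  define C2 where "C2 = (B+1) * (3*pi+pi^2)*(2+pi)"
  define C3 where "C3 = 3*pi*(B+1)*(K+1) + pi^3*(B+1)^2*(K+1)"
  have p1: "0 < B + 1" "0 < K + 1" "0 < 3*pi+pi^2" "0 < 2 + pi" using B K0 by (auto intro: add_pos_pos)
  have C1: "C1 > 0" unfolding C1_def using p1 by (intro mult_pos_pos) auto
  have C2: "C2 > 0" unfolding C2_def using p1 by (intro mult_pos_pos) auto
  have C3: "C3 > 0"
  proof -
    have "0 < 3*pi*(B+1)*(K+1)" using B K0 by simp
    moreover have "0 \<le> pi^3*(B+1)^2*(K+1)" using B K0 by simp
    ultimately show ?thesis unfolding C3_def by linarith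
  qed
  have main: "cmod (integral {0..pi} (\<lambda>x. F V x z * complex_of_real (cos (real n * x))))
       \<le> C1 * exp (pi * \<bar>Im (csqrt z)\<bar>) / (real n)^2
            * (1 + (1 + cmod z) / (1 + pi * sqrt (cmod z)))
   \<and> cmod (integral {0..a} (\<lambda>x. complex_of_real (rho V x) * cos (csqrt z * complex_of_real x)
                                  * complex_of_real (sin (real n * x))))
       \<le> C2 * exp (pi * \<bar>Im (csqrt z)\<bar>) / real n
            * (1 + cmod z / (1 + pi * sqrt (cmod z)))
   \<and> cmod (integral {0..a} (\<lambda>x. complex_of_real (rho V x) * F V x z
                                  * complex_of_real (sin (real n * x))))
       \<le> C3 * exp (pi * \<bar>Im (csqrt z)\<bar>) / real n
            * (1 + 1 / (1 + pi * sqrt (cmod z)))" if n: "1 \<le> n" for z :: complex and n :: nat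
  proof -
    define w where "w = csqrt z"
    define E where "E = exp (pi * \<bar>Im (csqrt z)\<bar>)"
    define W where "W = sqrt (cmod z)"
    define R1 where "R1 = 1 + (1 + cmod z) / (1 + pi * sqrt (cmod z))"
    define R2 where "R2 = 1 + cmod z / (1 + pi * sqrt (cmod z))"
    define R3 where "R3 = 1 + 1 / (1 + pi * sqrt (cmod z))"
    have E0: "0 \<le> E" by (simp add: E_def)
    have E': "E = exp (pi * \<bar>Im w\<bar>)" by (simp only: E_def w_def)
    have W0: "0 \<le> W" by (simp add: W_def)
    have nw: "norm w = W" by (simp add: w_def W_def)
    have n0: "0 < real n" using n by simp
    have RR: "1 + W \<le> (2+pi) * R2" "R2 \<le> R1" "1 \<le> R3"
      using R_ineq[of z] by (simp_all add: W_def R1_def R2_def R3_def)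
    obtain Fp Fpp where FF:
      "\<And>x. x \<in> {0..pi} \<Longrightarrow> ((\<lambda>x. F V x z) has_vector_derivative Fp x) (at x within {0..pi})"
      "\<And>x. x \<in> {0..pi} \<Longrightarrow> (Fp has_vector_derivative Fpp x) (at x within {0..pi})"
      "continuous_on {0..pi} Fpp"
      "\<And>x. x \<in> {0..pi} \<Longrightarrow> norm (F V x z) \<le> (K + 1) * E"
      "\<And>x. x \<in> {0..pi} \<Longrightarrow> norm (Fp x) \<le> pi * B * K * E"
      "\<And>x. x \<in> {0..pi} \<Longrightarrow> norm (Fpp x) \<le> B * K * E + W * (pi * B * K * E)"
      using F_facts[OF Vcont B(2) B(1), of z] unfolding K_def[symmetric] E_def[symmetric] W_def[symmetric]
      by blast
    have Fc: "continuous_on {0..pi} (\<lambda>x. F V x z)" by (rule continuous_on_vector_derivative) (rule FF(1))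
    have Fpc: "continuous_on {0..pi} Fp" by (rule continuous_on_vector_derivative) (rule FF(2))
    have Cfc: "continuous_on {0..pi} (Cf w)" by (rule continuous_on_vector_derivative) (rule Cf_deriv)
    have Sfc: "continuous_on {0..pi} (Sf w)" by (rule continuous_on_vector_derivative) (rule Sf_deriv)
    have CfE: "norm (Cf w x) \<le> E" if x: "x \<in> {0..pi}" for x
    proof -
      have "\<bar>Im w\<bar> * \<bar>x\<bar> \<le> pi * \<bar>Im w\<bar>" using x mult_left_mono[of x pi "\<bar>Im w\<bar>"] by (simp add: mult.commute)
      hence "exp (\<bar>Im w\<bar> * \<bar>x\<bar>) \<le> E" unfolding E' by (subst exp_le_cancel_iff)
      thus ?thesis using Cf_bound[of w x] by linarith
    qed
    have zSfE: "norm ((w*w) * Sf w x) \<le> W * E" if x: "x \<in> {0..pi}" for x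
    proof -
      have "\<bar>Im w\<bar> * \<bar>x\<bar> \<le> pi * \<bar>Im w\<bar>" using x mult_left_mono[of x pi "\<bar>Im w\<bar>"] by (simp add: mult.commute)
      hence "exp (\<bar>Im w\<bar> * \<bar>x\<bar>) \<le> E" unfolding E' by (subst exp_le_cancel_iff)
      hence "norm (w * Sf w x) \<le> E" using wSf_bound[of w x] by linarith
      hence "norm w * norm (w * Sf w x) \<le> W * E" using nw W0 by (simp add: mult_left_mono)
      thus ?thesis by (simp add: norm_mult mult.assoc)
    qed
    have I1: "integral {0..pi} (\<lambda>x. F V x z * complex_of_real (cos (real n * x))) =
       - integral {0..pi} (\<lambda>x. Fp x * complex_of_real (sin (real n * x))) / of_real (real n)"
      by (rule ibp_cos_pi[OF n FF(1) Fpc])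
    have J1: "norm (integral {0..pi} (\<lambda>x. Fp x * complex_of_real (sin (real n * x))))
        \<le> (2 * (pi * B * K * E) + pi * (B * K * E + W * (pi * B * K * E))) / real n"
      by (rule ibp_sin[OF pi_ge_zero n FF(2) FF(3) FF(5) FF(6)])
    have X1: "2 * (pi * B * K * E) + pi * (B * K * E + W * (pi * B * K * E)) \<le> C1 * E * R1"
    proof -
      have "2 * (pi * B * K * E) + pi * (B * K * E + W * (pi * B * K * E)) = (B*K)*E*(3*pi + pi^2*W)"
        by (simp add: algebra_simps power2_eq_square)
      also have "\<dots> \<le> ((B+1)*(K+1)) * (3*pi+pi^2)*(2+pi) * E * R2"
        by (rule arith1) (use B K0 E0 W0 RR in \<open>auto intro!: mult_mono\<close>)
      also have "\<dots> \<le> ((B+1)*(K+1)) * (3*pi+pi^2)*(2+pi) * E * R1"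
        using RR B K0 E0 by (intro mult_left_mono) auto
      finally show ?thesis by (simp add: C1_def)
    qed
    have ineq1: "cmod (integral {0..pi} (\<lambda>x. F V x z * complex_of_real (cos (real n * x))))
       \<le> C1 * E / (real n)^2 * R1"
    proof -
      have "cmod (integral {0..pi} (\<lambda>x. F V x z * complex_of_real (cos (real n * x))))
          = norm (integral {0..pi} (\<lambda>x. Fp x * complex_of_real (sin (real n * x)))) / real n"
        unfolding I1 by (simp add: norm_divide)
      also have "\<dots> \<le> (2 * (pi * B * K * E) + pi * (B * K * E + W * (pi * B * K * E))) / real n / real n"
        by (rule divide_right_mono[OF J1]) (use n0 in simp)
      also have "\<dots> \<le> C1 * E * R1 / real n / real n"
        using X1 n0 by (intro divide_right_mono) auto
      also have "\<dots> = C1 * E / (real n)^2 * R1" by (simp add: power2_eq_square field_simps)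
      finally show ?thesis .
    qed
    have J2: "norm (integral {0..a} (\<lambda>x. complex_of_real (rho V x) * Cf w x * complex_of_real (sin (real n * x))))
        \<le> (2 * (pi * B * E) + a * (pi * B * (W * E) + B * E)) / real n"
    proof (rule ibp_sin[OF a0 n, where f' = "\<lambda>x. complex_of_real (rho V x) * (- (w*w) * Sf w x) + r' x * Cf w x"])
      fix x assume x: "x \<in> {0..a}"
      hence x': "x \<in> {0..pi}" using sub by auto
      show "((\<lambda>x. complex_of_real (rho V x) * Cf w x) has_vector_derivative
          complex_of_real (rho V x) * (- (w*w) * Sf w x) + r' x * Cf w x) (at x within {0..a})"
        by (rule has_vector_derivative_within_subset[OF has_vector_derivative_mult[OF rf(1)[OF x'] Cf_deriv] sub])
      show "norm (complex_of_real (rho V x) * Cf w x) \<le> pi * B * E"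
        unfolding norm_mult using rf(4)[OF x'] CfE[OF x'] E0 by (intro mult_mono) auto
      have e: "complex_of_real (rho V x) * (- (w*w) * Sf w x) = - (complex_of_real (rho V x) * ((w*w) * Sf w x))"
        by simp
      have "norm (complex_of_real (rho V x)) * norm ((w*w) * Sf w x) \<le> pi * B * (W * E)"
        using rf(4)[OF x'] zSfE[OF x'] E0 W0 B by (intro mult_mono) auto
      hence "norm (complex_of_real (rho V x) * (- (w*w) * Sf w x)) \<le> pi * B * (W * E)"
        unfolding e norm_minus_cancel by (metis norm_mult)
      moreover have "norm (r' x * Cf w x) \<le> B * E"
        unfolding norm_mult using rf(3)[OF x'] CfE[OF x'] E0 B by (intro mult_mono) auto
      ultimately show "norm (complex_of_real (rho V x) * (- (w*w) * Sf w x) + r' x * Cf w x) \<le> pi * B * (W * E) + B * E"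
        by (smt (verit) norm_triangle_ineq)
    next
      show "continuous_on {0..a} (\<lambda>x. complex_of_real (rho V x) * (- (w*w) * Sf w x) + r' x * Cf w x)"
        by (rule continuous_on_subset[OF _ sub]) (intro continuous_intros rhoc Sfc rf(2) Cfc)
    qed
    have X2: "2 * (pi * B * E) + a * (pi * B * (W * E) + B * E) \<le> C2 * E * R2"
    proof -
      have "a * (pi * B * (W * E) + B * E) \<le> pi * (pi * B * (W * E) + B * E)"
        using a_le B E0 W0 by (intro mult_right_mono) auto
      hence "2 * (pi * B * E) + a * (pi * B * (W * E) + B * E) \<le> B*E*(3*pi + pi^2*W)"
        by (simp add: algebra_simps power2_eq_square)
      also have "\<dots> \<le> (B+1) * (3*pi+pi^2)*(2+pi) * E * R2"
        by (rule arith1) (use B E0 W0 RR in auto)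
      finally show ?thesis by (simp add: C2_def)
    qed
    have ineq2: "cmod (integral {0..a} (\<lambda>x. complex_of_real (rho V x) * cos (csqrt z * complex_of_real x)
                                  * complex_of_real (sin (real n * x))))
       \<le> C2 * E / real n * R2"
    proof -
      have "cmod (integral {0..a} (\<lambda>x. complex_of_real (rho V x) * cos (csqrt z * complex_of_real x)
                                  * complex_of_real (sin (real n * x))))
          \<le> (2 * (pi * B * E) + a * (pi * B * (W * E) + B * E)) / real n"
        using J2 by (simp add: Cf_def w_def)
      also have "\<dots> \<le> C2 * E * R2 / real n" using X2 n0 by (simp add: divide_right_mono)
      finally show ?thesis by simp
    qed
    have J3: "norm (integral {0..a} (\<lambda>x. complex_of_real (rho V x) * F V x z * complex_of_real (sin (real n * x))))
        \<le> (2 * (pi * B * ((K + 1) * E)) + a * (pi * B * (pi * B * K * E) + B * ((K + 1) * E))) / real n"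
    proof (rule ibp_sin[OF a0 n, where f' = "\<lambda>x. complex_of_real (rho V x) * Fp x + r' x * F V x z"])
      fix x assume x: "x \<in> {0..a}"
      hence x': "x \<in> {0..pi}" using sub by auto
      show "((\<lambda>x. complex_of_real (rho V x) * F V x z) has_vector_derivative
          complex_of_real (rho V x) * Fp x + r' x * F V x z) (at x within {0..a})"
        by (rule has_vector_derivative_within_subset[OF has_vector_derivative_mult[OF rf(1)[OF x'] FF(1)[OF x']] sub])
      show "norm (complex_of_real (rho V x) * F V x z) \<le> pi * B * ((K + 1) * E)"
        unfolding norm_mult using rf(4)[OF x'] FF(4)[OF x'] E0 K0 by (intro mult_mono) auto
      have "norm (complex_of_real (rho V x) * Fp x) \<le> pi * B * (pi * B * K * E)"
        unfolding norm_mult using rf(4)[OF x'] FF(5)[OF x'] E0 B K0 by (intro mult_mono) auto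
      moreover have "norm (r' x * F V x z) \<le> B * ((K + 1) * E)"
        unfolding norm_mult using rf(3)[OF x'] FF(4)[OF x'] E0 B K0 by (intro mult_mono) auto
      ultimately show "norm (complex_of_real (rho V x) * Fp x + r' x * F V x z) \<le> pi * B * (pi * B * K * E) + B * ((K + 1) * E)"
        by (smt (verit) norm_triangle_ineq)
    next
      show "continuous_on {0..a} (\<lambda>x. complex_of_real (rho V x) * Fp x + r' x * F V x z)"
        by (rule continuous_on_subset[OF _ sub]) (intro continuous_intros rhoc Fpc rf(2) Fc)
    qed
    have X3: "2 * (pi * B * ((K + 1) * E)) + a * (pi * B * (pi * B * K * E) + B * ((K + 1) * E)) \<le> C3 * E * R3"
    proof -
      have "a * (pi * B * (pi * B * K * E) + B * ((K + 1) * E)) \<le> pi * (pi * B * (pi * B * K * E) + B * ((K + 1) * E))"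
        using a_le B E0 K0 by (intro mult_right_mono) auto
      hence "2 * (pi * B * ((K + 1) * E)) + a * (pi * B * (pi * B * K * E) + B * ((K + 1) * E))
          \<le> (3*pi*B*(K+1) + pi^3*B^2*K) * E"
        by (simp add: algebra_simps power2_eq_square power3_eq_cube)
      also have "\<dots> \<le> C3 * E"
      proof (rule mult_right_mono[OF _ E0])
        have "3*pi*B*(K+1) \<le> 3*pi*(B+1)*(K+1)" using B K0 by (intro mult_right_mono) auto
        moreover have "pi^3*B^2*K \<le> pi^3*(B+1)^2*(K+1)"
          using B K0 by (intro mult_mono power_mono) auto
        ultimately show "3*pi*B*(K+1) + pi^3*B^2*K \<le> C3" unfolding C3_def by (rule add_mono)
      qed
      also have "\<dots> \<le> C3 * E * R3"
        using mult_left_mono[OF RR(3), of "C3 * E"] C3 E0 by simp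
      finally show ?thesis .
    qed
    have ineq3: "cmod (integral {0..a} (\<lambda>x. complex_of_real (rho V x) * F V x z
                                  * complex_of_real (sin (real n * x))))
       \<le> C3 * E / real n * R3"
    proof -
      have "cmod (integral {0..a} (\<lambda>x. complex_of_real (rho V x) * F V x z
                                  * complex_of_real (sin (real n * x))))
          \<le> C3 * E * R3 / real n" using J3 X3 n0 by (smt (verit) divide_right_mono)
      thus ?thesis by simp
    qed
    show ?thesis using ineq1 ineq2 ineq3 by (simp add: E_def R1_def R2_def R3_def)
  qed
  show ?thesis
    by (intro exI[of _ C1] exI[of _ C2] exI[of _ C3] conjI C1 C2 C3 allI impI main)
qed


end
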